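(* Let $\mathcal U$ be a finite set and $R$ an $n(R)$-place relation on $\mathcal U$ with $\lambda_1(R)\cdot n(R)^2+n(R)<|\mathcal U|$. There are a set $A\subseteq\mathcal U$ and a sequence $\bar C=\langle C_\ell:\ell<n(R)-2\rangle$ of subsets of $\mathcal U$ such that: (A) $|A|\le n(R)\cdot n(R)\cdot\lambda_1(R)$; (B) if $\bar b,\bar c$ are $n(R)$-tuples from $\mathcal U$ with $b_i=b_j\iff c_i=c_j$ for all $i,j$, and $b_i\,E_{A,\bar C}\,c_i$ for all $i<n(R)$, then $R(\bar b)\iff R(\bar c)$; (C) $E_A$ has at most $|A|+\lambda_1(R)$ equivalence classes; (D) each $C_\ell$ has at most $\lambda_1(R)$ elements.
   Context: $\mathrm{tp}_{\mathrm{bs}}(a,A,R)$ (for $a\in\mathcal U$, $A\subseteq\mathcal U$) is the set of formulas $\varphi(x,\bar a)$, with $\bar a$ from $A$ and $\varphi$ atomic or negated atomic in the vocabulary $\{R,=\}$, such that $(\mathcal U,R)\models\varphi(a,\bar a)$. $\lambda_1(R)=\max_{A\subseteq\mathcal U}|\{\mathrm{tp}_{\mathrm{bs}}(a,A,R):a\in\mathcal U\setminus A\}|$. For $A\subseteq\mathcal U$, $E_A$ is the equivalence relation on $\mathcal U$: $a\,E_A\,b$ iff $\mathrm{tp}_{\mathrm{bs}}(a,A,R)=\mathrm{tp}_{\mathrm{bs}}(b,A,R)$. For $A\subseteq\mathcal U$ and $\bar C=\langle C_\ell:\ell<k\rangle$ with $C_\ell\subseteq\mathcal U$, $a\,E_{A,\bar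 C}\,b$ iff $a\,E_A\,b$ and, for every $\ell<k$, $a\in C_\ell\iff b\in C_\ell$. *)

theory Defs
  imports Main
begin

text \<open>Terms of basic formulas in one free variable x with parameters.\<close>
datatype 'a tm = Var | Par 'a

datatype 'a atom = Eq "'a tm" "'a tm" | Rel "'a tm list"

datatype 'a lit = Pos "'a atom" | Neg "'a atom"

fun tm_val :: "'a \<Rightarrow> 'a tm \<Rightarrow> 'a" where
  "tm_val a Var = a"
| "tm_val a (Par p) = p"

fun tm_params :: "'a tm \<Rightarrow> 'a set" where
  "tm_params Var = {}"
| "tm_params (Par p) = {p}"

fun atom_params :: "'a atom \<Rightarrow> 'a set" where
  "atom_params (Eq s t) = tm_params s \<union> tm_params t"
| "atom_params (Rel ts) = (\<Union>t\<in>set ts. tm_params t)"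

fun lit_params :: "'a lit \<Rightarrow> 'a set" where
  "lit_params (Pos f) = atom_params f"
| "lit_params (Neg f) = atom_params f"

fun atom_wf :: "nat \<Rightarrow> 'a atom \<Rightarrow> bool" where
  "atom_wf n (Eq s t) = True"
| "atom_wf n (Rel ts) = (length ts = n)"

fun lit_wf :: "nat \<Rightarrow> 'a lit \<Rightarrow> bool" where
  "lit_wf n (Pos f) = atom_wf n f"
| "lit_wf n (Neg f) = atom_wf n f"

fun atom_holds :: "'a list set \<Rightarrow> 'a \<Rightarrow> 'a atom \<Rightarrow> bool" where
  "atom_holds R a (Eq s t) = (tm_val a s = tm_val a t)"
| "atom_holds R a (Rel ts) = (map (tm_val a) ts \<in> R)"

fun lit_holds :: "'a list set \<Rightarrow> 'a \<Rightarrow> 'a lit \<Rightarrow> bool" where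
  "lit_holds R a (Pos f) = atom_holds R a f"
| "lit_holds R a (Neg f) = (\<not> atom_holds R a f)"

definition is_relation :: "'a set \<Rightarrow> nat \<Rightarrow> 'a list set \<Rightarrow> bool" where
  "is_relation U n R \<longleftrightarrow> (\<forall>xs\<in>R. length xs = n \<and> set xs \<subseteq> U)"

definition tp_bs :: "nat \<Rightarrow> 'a list set \<Rightarrow> 'a \<Rightarrow> 'a set \<Rightarrow> 'a lit set" where
  "tp_bs n R a A = {\<phi>. lit_wf n \<phi> \<and> lit_params \<phi> \<subseteq> A \<and> lit_holds R a \<phi>}"

definition lambda1 :: "'a set \<Rightarrow> nat \<Rightarrow> 'a list set \<Rightarrow> nat" where
  "lambda1 U n R = Max {card ((\<lambda>a. tp_bs n R a A) ` (U - A)) | A. A \<subseteq> U}"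

definition E_rel :: "'a set \<Rightarrow> nat \<Rightarrow> 'a list set \<Rightarrow> 'a set \<Rightarrow> ('a \<times> 'a) set" where
  "E_rel U n R A = {(a, b). a \<in> U \<and> b \<in> U \<and> tp_bs n R a A = tp_bs n R b A}"

definition E_rel_C :: "'a set \<Rightarrow> nat \<Rightarrow> 'a list set \<Rightarrow> 'a set \<Rightarrow> nat \<Rightarrow> (nat \<Rightarrow> 'a set) \<Rightarrow> ('a \<times> 'a) set" where
  "E_rel_C U n R A k C = {(a, b). (a, b) \<in> E_rel U n R A \<and> (\<forall>l<k. a \<in> C l \<longleftrightarrow> b \<in> C l)}"

end

theory Submission
  imports Defs
begin

lemma finite_tm_params: "finite (tm_params t)"
  by (cases t) auto

lemma finite_lit_params: "finite (lit_params \<psi>)"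
proof (cases \<psi>)
  case (Pos a) then show ?thesis by (cases a) (auto simp: finite_tm_params)
next
  case (Neg a) then show ?thesis by (cases a) (auto simp: finite_tm_params)
qed



lemma Rel_params_card:
  assumes "Var \<in> set ts"
  shows "card (\<Union>t\<in>set ts. tm_params t) \<le> length ts - 1"
proof -
  let ?f = "\<lambda>t. case t of Var \<Rightarrow> undefined | Par p \<Rightarrow> p"
  have sub: "(\<Union>t\<in>set ts. tm_params t) \<subseteq> ?f ` (set ts - {Var})"
  proof
    fix x assume "x \<in> (\<Union>t\<in>set ts. tm_params t)"
    then obtain t where ht: "t \<in> set ts" "x \<in> tm_params t" by auto
    obtain p where "t = Par p" "x = p" using ht(2) by (cases t) auto
    with ht show "x \<in> ?f ` (set ts - {Var})" by force
  qed
  have "card (\<Union>t\<in>set ts. tm_params t) \<le> card (?f ` (set ts - {Var}))"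
    by (rule card_mono[OF _ sub]) simp
  also have "\<dots> \<le> card (set ts - {Var})" by (rule card_image_le) simp
  also have "\<dots> = card (set ts) - 1" using assms by simp
  also have "\<dots> \<le> length ts - 1" using card_length[of ts] by simp
  finally show ?thesis .
qed

lemma map_tm_val_noVar:
  assumes "Var \<notin> set ts"
  shows "map (tm_val u) ts = map (tm_val v) ts"
proof (rule map_cong[OF refl])
  fix t assume "t \<in> set ts"
  with assms show "tm_val u t = tm_val v t" by (cases t) auto
qed

lemma dsep_card_aux:
  assumes wf: "lit_wf n \<psi>" and par: "lit_params \<psi> \<subseteq> U - {u,v}"
    and h: "lit_holds R u \<psi> \<noteq> lit_holds R v \<psi>"
  shows "card (lit_params \<psi>) \<le> n - 1"
proof -
  obtain a where a: "\<psi> = Pos a \<or> \<psi> = Neg a" by (cases \<psi>) auto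
  have ha: "atom_holds R u a \<noteq> atom_holds R v a" using a h by auto
  have pa: "lit_params \<psi> = atom_params a" using a by auto
  have wa: "atom_wf n a" using a wf by auto
  show ?thesis
  proof (cases a)
    case (Eq s t)
    have "atom_params a \<subseteq> U - {u,v}" using par pa by simp
    then show ?thesis using ha Eq by (cases s; cases t) auto
  next
    case (Rel ts)
    have "Var \<in> set ts"
    proof (rule ccontr)
      assume "Var \<notin> set ts"
      then have "map (tm_val u) ts = map (tm_val v) ts" by (rule map_tm_val_noVar)
      then have "atom_holds R u a = atom_holds R v a" using Rel by (simp only: atom_holds.simps)
      then show False using ha by simp
    qed
    then have "card (\<Union>t\<in>set ts. tm_params t) \<le> length ts - 1" by (rule Rel_params_card)
    then show ?thesis using pa Rel wa by simp
  qed
qed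


lemma card_image_lt_not_inj:
  assumes "finite A" "\<not> inj_on f A"
  shows "card (f ` A) < card A"
  using assms card_image_le eq_card_imp_inj_on le_neq_implies_less by metis

lemma params_map_if: "(\<Union>x\<in>set t. tm_params (if x = a then Var else Par x)) = set t - {a}"
proof (induction t)
  case Nil then show ?case by simp
next
  case (Cons y ys)
  show ?case
  proof (cases "y = a")
    case True then show ?thesis using Cons by auto
  next
    case False then show ?thesis using Cons by auto
  qed
qed

locale L3 =
  fixes U :: "'a set" and n :: nat and R :: "'a list set"
  assumes finU: "finite U"
begin

abbreviation tp where "tp a A \<equiv> tp_bs n R a A"

definition lam where "lam = lambda1 U n R"

definition cls :: "'a set \<Rightarrow> nat" where
  "cls B = card ((\<lambda>a. tp a B) ` (U - B))"

definition dsep where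
  "dsep u v \<psi> \<longleftrightarrow> lit_wf n \<psi> \<and> lit_params \<psi> \<subseteq> U - {u,v} \<and> (lit_holds R u \<psi> \<noteq> lit_holds R v \<psi>)"

definition Inv where
  "Inv B m \<longleftrightarrow> (\<forall>u v \<psi>. u \<in> U - B \<longrightarrow> v \<in> U - B \<longrightarrow> tp u B = tp v B \<longrightarrow> dsep u v \<psi>
      \<longrightarrow> card (lit_params \<psi> - B) \<le> m)"

definition clsof where "clsof B w = {x \<in> U - B. tp x B = tp w B}"

definition terminal where
  "terminal B \<longleftrightarrow> (\<forall>u v \<psi>. u \<in> U - B \<longrightarrow> v \<in> U - B \<longrightarrow> tp u B = tp v B \<longrightarrow> dsep u v \<psi>
      \<longrightarrow> (\<exists>w \<in> lit_params \<psi> - B. clsof B w \<subseteq> lit_params \<psi> - B))"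

definition small where "small m B = {x \<in> U - B. card (clsof B x) \<le> m}"

definition wt where
  "wt u v \<longleftrightarrow> (\<forall>\<psi>. lit_wf n \<psi> \<longrightarrow> lit_params \<psi> \<subseteq> U - {u,v} \<longrightarrow> (lit_holds R u \<psi> = lit_holds R v \<psi>))"

lemma tp_restrict:
  assumes "B \<subseteq> B2"
  shows "tp x B = {\<phi> \<in> tp x B2. lit_params \<phi> \<subseteq> B}"
  using assms unfolding tp_bs_def by auto

lemma tp_eq_restrict:
  assumes "B \<subseteq> B2" "tp x B2 = tp y B2"
  shows "tp x B = tp y B"
  using assms tp_restrict by metis

lemma cls_le:
  assumes "B \<subseteq> U"
  shows "cls B \<le> lam"
proof -
  have fin: "finite {card ((\<lambda>a. tp_bs n R a A) ` (U - A)) | A. A \<subseteq> U}"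
  proof -
    have "{card ((\<lambda>a. tp_bs n R a A) ` (U - A)) | A. A \<subseteq> U}
        = (\<lambda>A. card ((\<lambda>a. tp_bs n R a A) ` (U - A))) ` Pow U" by auto
    then show ?thesis using finU by simp
  qed
  show ?thesis unfolding cls_def lam_def lambda1_def
    by (rule Max_ge[OF fin]) (use assms in blast)
qed

lemma Inv_mono:
  assumes "Inv B m" "B \<subseteq> B2"
  shows "Inv B2 m"
  unfolding Inv_def
proof (intro allI impI)
  fix u v \<psi>
  assume u: "u \<in> U - B2" and v: "v \<in> U - B2" and e: "tp u B2 = tp v B2" and d: "dsep u v \<psi>"
  have "tp u B = tp v B" using tp_eq_restrict[OF assms(2) e] .
  then have "card (lit_params \<psi> - B) \<le> m" using assms(1) u v d assms(2) unfolding Inv_def by blast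
  moreover have "card (lit_params \<psi> - B2) \<le> card (lit_params \<psi> - B)"
    by (rule card_mono) (use finite_lit_params assms(2) in auto)
  ultimately show "card (lit_params \<psi> - B2) \<le> m" by simp
qed

lemma Inv_init: "Inv {} (n - 1)"
  unfolding Inv_def
proof (intro allI impI)
  fix u v \<psi> assume "dsep u v \<psi>"
  then have "lit_wf n \<psi>" "lit_params \<psi> \<subseteq> U - {u,v}" "lit_holds R u \<psi> \<noteq> lit_holds R v \<psi>"
    unfolding dsep_def by auto
  then have "card (lit_params \<psi>) \<le> n - 1" by (rule dsep_card_aux)
  then show "card (lit_params \<psi> - {}) \<le> n - 1" by simp
qed

lemma Inv0_wt:
  assumes I: "Inv B 0" and u: "u \<in> U - B" and v: "v \<in> U - B" and e: "tp u B = tp v B"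
  shows "wt u v"
  unfolding wt_def
proof (intro allI impI)
  fix \<psi> assume wf: "lit_wf n \<psi>" and par: "lit_params \<psi> \<subseteq> U - {u,v}"
  show "lit_holds R u \<psi> = lit_holds R v \<psi>"
  proof (rule ccontr)
    assume ne: "lit_holds R u \<psi> \<noteq> lit_holds R v \<psi>"
    then have "dsep u v \<psi>" using wf par unfolding dsep_def by simp
    then have "card (lit_params \<psi> - B) \<le> 0" using I u v e unfolding Inv_def by blast
    then have "lit_params \<psi> \<subseteq> B" using finite_lit_params[of \<psi>] by auto
    then have "(\<psi> \<in> tp u B) = lit_holds R u \<psi>" "(\<psi> \<in> tp v B) = lit_holds R v \<psi>"
      using wf unfolding tp_bs_def by auto
    then show False using ne e by simp
  qed
qed

lemma good_step:
  assumes B: "B \<subseteq> U" and I: "Inv B m" and nt: "\<not> terminal B"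
  shows "\<exists>B2. B \<subseteq> B2 \<and> B2 \<subseteq> U \<and> card B2 \<le> card B + m \<and> cls B < cls B2"
proof -
  from nt obtain u v \<psi> where u: "u \<in> U - B" and v: "v \<in> U - B" and e: "tp u B = tp v B"
    and d: "dsep u v \<psi>"
    and nw: "\<forall>w \<in> lit_params \<psi> - B. \<not> clsof B w \<subseteq> lit_params \<psi> - B"
    unfolding terminal_def by blast
  define P where "P = lit_params \<psi> - B"
  define B2 where "B2 = B \<union> P"
  have parU: "lit_params \<psi> \<subseteq> U - {u,v}" using d unfolding dsep_def by simp
  have B2U: "B2 \<subseteq> U" using B parU unfolding B2_def P_def by auto
  have cP: "card P \<le> m" using I u v e d unfolding Inv_def P_def by blast
  have cB2: "card B2 \<le> card B + m"
    using card_Un_le[of B P] cP unfolding B2_def by simp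
  define r where "r = (\<lambda>S. {\<phi> \<in> S. lit_params \<phi> \<subseteq> B})"
  define I1 where "I1 = (\<lambda>a. tp a B) ` (U - B)"
  define I2 where "I2 = (\<lambda>a. tp a B2) ` (U - B2)"
  have BB2: "B \<subseteq> B2" unfolding B2_def by simp
  have rtp: "r (tp x B2) = tp x B" for x
    using tp_restrict[OF BB2, of x] unfolding r_def by simp
  have img: "r ` I2 = I1"
  proof
    show "r ` I2 \<subseteq> I1"
    proof
      fix \<tau> assume "\<tau> \<in> r ` I2"
      then obtain x where x: "x \<in> U - B2" "\<tau> = r (tp x B2)" unfolding I2_def by blast
      then have "\<tau> = tp x B" using rtp by simp
      moreover have "x \<in> U - B" using x(1) BB2 by blast
      ultimately show "\<tau> \<in> I1" unfolding I1_def by blast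
    qed
  next
    show "I1 \<subseteq> r ` I2"
    proof
      fix \<tau> assume "\<tau> \<in> I1"
      then obtain x where x: "x \<in> U - B" "\<tau> = tp x B" unfolding I1_def by blast
      have "\<exists>y. y \<in> U - B2 \<and> tp y B = tp x B"
      proof (cases "x \<in> P")
        case False
        then have "x \<in> U - B2" using x unfolding B2_def by blast
        then show ?thesis by blast
      next
        case True
        then have "\<not> clsof B x \<subseteq> P" using nw unfolding P_def by blast
        then obtain x' where x': "x' \<in> clsof B x" "x' \<notin> P" by blast
        then have "x' \<in> U - B2" "tp x' B = tp x B" unfolding clsof_def B2_def by auto
        then show ?thesis by blast
      qed
      then obtain y where y: "y \<in> U - B2" "tp y B = tp x B" by blast
      have "tp y B2 \<in> I2" using y(1) unfolding I2_def by blast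
      moreover have "\<tau> = r (tp y B2)" using rtp y(2) x(2) by simp
      ultimately show "\<tau> \<in> r ` I2" by blast
    qed
  qed
  have uB2: "u \<in> U - B2" and vB2: "v \<in> U - B2" using u v parU unfolding B2_def P_def by auto
  have ni: "\<not> inj_on r I2"
  proof
    assume inj: "inj_on r I2"
    have "tp u B2 \<in> I2" "tp v B2 \<in> I2" using uB2 vB2 unfolding I2_def by auto
    moreover have "r (tp u B2) = r (tp v B2)" using rtp e by simp
    ultimately have eq2: "tp u B2 = tp v B2" using inj by (meson inj_on_def)
    have wf: "lit_wf n \<psi>" and hd: "lit_holds R u \<psi> \<noteq> lit_holds R v \<psi>" using d unfolding dsep_def by auto
    have "lit_params \<psi> \<subseteq> B2" unfolding B2_def P_def by auto
    then have "(\<psi> \<in> tp u B2) = lit_holds R u \<psi>" "(\<psi> \<in> tp v B2) = lit_holds R v \<psi>"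
      using wf unfolding tp_bs_def by auto
    then show False using hd eq2 by simp
  qed
  have finI2: "finite I2" unfolding I2_def using finU by simp
  have "card I1 < card I2" using card_image_lt_not_inj[OF finI2 ni] img by simp
  then have "cls B < cls B2" unfolding cls_def I1_def I2_def .
  then show ?thesis using BB2 B2U cB2 by blast
qed

lemma phase:
  assumes "B \<subseteq> U" "Inv B m"
  shows "\<exists>Be. B \<subseteq> Be \<and> Be \<subseteq> U \<and> terminal Be \<and> card Be \<le> card B + m * (lam - cls B)"
  using assms
proof (induction "lam - cls B" arbitrary: B rule: less_induct)
  case less
  show ?case
  proof (cases "terminal B")
    case True then show ?thesis using less.prems by auto
  next
    case False
    obtain B2 where b2: "B \<subseteq> B2" "B2 \<subseteq> U" "card B2 \<le> card B + m" "cls B < cls B2"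
      using good_step[OF less.prems False] by blast
    have c2: "cls B2 \<le> lam" using cls_le[OF b2(2)] .
    have lt: "lam - cls B2 < lam - cls B" using c2 b2(4) by simp
    have I2: "Inv B2 m" using Inv_mono[OF less.prems(2) b2(1)] .
    obtain Be where be: "B2 \<subseteq> Be" "Be \<subseteq> U" "terminal Be" "card Be \<le> card B2 + m * (lam - cls B2)"
      using less.hyps[OF lt b2(2) I2] by blast
    have "m * (lam - cls B2) + m \<le> m * (lam - cls B)"
    proof -
      have "lam - cls B2 + 1 \<le> lam - cls B" using lt by simp
      then have "m * (lam - cls B2 + 1) \<le> m * (lam - cls B)" by (rule mult_le_mono2)
      then show ?thesis by (simp add: algebra_simps)
    qed
    then have "card Be \<le> card B + m * (lam - cls B)" using be(4) b2(3) by linarith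
    then show ?thesis using be b2(1) by blast
  qed
qed

lemma small_card:
  assumes "B \<subseteq> U"
  shows "card (small m B) \<le> m * cls B"
proof -
  define I1 where "I1 = (\<lambda>a. tp a B) ` (U - B)"
  define fib where "fib = (\<lambda>\<tau>. {x \<in> U - B. tp x B = \<tau>})"
  define F where "F = (\<lambda>\<tau>. if card (fib \<tau>) \<le> m then fib \<tau> else {})"
  have sub: "small m B \<subseteq> (\<Union>\<tau>\<in>I1. F \<tau>)"
  proof
    fix x assume x: "x \<in> small m B"
    then have "x \<in> U - B" "card (clsof B x) \<le> m" unfolding small_def by auto
    moreover have "clsof B x = fib (tp x B)" unfolding clsof_def fib_def by simp
    ultimately show "x \<in> (\<Union>\<tau>\<in>I1. F \<tau>)" unfolding I1_def F_def fib_def by auto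
  qed
  have finI1: "finite I1" unfolding I1_def using finU by simp
  have "card (small m B) \<le> card (\<Union>\<tau>\<in>I1. F \<tau>)"
    by (rule card_mono[OF _ sub]) (use finI1 finU in \<open>auto simp: F_def fib_def\<close>)
  also have "\<dots> \<le> (\<Sum>\<tau>\<in>I1. card (F \<tau>))" by (rule card_UN_le[OF finI1])
  also have "\<dots> \<le> (\<Sum>\<tau>\<in>I1. m)" by (rule sum_mono) (simp add: F_def)
  also have "\<dots> = m * card I1" by simp
  finally show ?thesis unfolding cls_def I1_def by simp
qed

lemma absorb:
  assumes B: "B \<subseteq> U" and I: "Inv B (Suc m)" and T: "terminal B"
  shows "Inv (B \<union> small (Suc m) B) m"
  unfolding Inv_def
proof (intro allI impI)
  fix u v \<psi>
  let ?B' = "B \<union> small (Suc m) B"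
  assume u: "u \<in> U - ?B'" and v: "v \<in> U - ?B'" and e: "tp u ?B' = tp v ?B'" and d: "dsep u v \<psi>"
  have eB: "tp u B = tp v B" using tp_eq_restrict[OF _ e] by simp
  have uB: "u \<in> U - B" and vB: "v \<in> U - B" using u v by auto
  define P where "P = lit_params \<psi> - B"
  obtain w where w: "w \<in> P" "clsof B w \<subseteq> P" using T uB vB eB d unfolding terminal_def P_def by blast
  have cP: "card P \<le> Suc m" using I uB vB eB d unfolding Inv_def P_def by blast
  have finP: "finite P" unfolding P_def using finite_lit_params[of \<psi>] by (rule finite_Diff)
  have "card (clsof B w) \<le> card P" by (rule card_mono[OF finP w(2)])
  moreover have "w \<in> U - B" using w(1) d unfolding P_def dsep_def by auto
  ultimately have "w \<in> small (Suc m) B" using cP unfolding small_def by simp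
  then have "lit_params \<psi> - ?B' \<subseteq> P - {w}" unfolding P_def by auto
  then have "card (lit_params \<psi> - ?B') \<le> card (P - {w})" by (rule card_mono[rotated]) (use finP in simp)
  also have "\<dots> = card P - 1" using w(1) finP by simp
  finally show "card (lit_params \<psi> - ?B') \<le> m" using cP by simp
qed

lemma Lmain:
  assumes "B \<subseteq> U" "Inv B m"
  shows "\<exists>B'. B \<subseteq> B' \<and> B' \<subseteq> U \<and> Inv B' 0 \<and> card B' \<le> card B + m * (m + 1) * lam"
  using assms
proof (induction m arbitrary: B)
  case 0
  then show ?case by auto
next
  case (Suc m)
  obtain Be where be: "B \<subseteq> Be" "Be \<subseteq> U" "terminal Be" "card Be \<le> card B + Suc m * (lam - cls B)"
    using phase[OF Suc.prems] by blast
  have IBe: "Inv Be (Suc m)" using Inv_mono[OF Suc.prems(2) be(1)] .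
  define B2 where "B2 = Be \<union> small (Suc m) Be"
  have I2: "Inv B2 m" using absorb[OF be(2) IBe be(3)] unfolding B2_def .
  have B2U: "B2 \<subseteq> U" using be(2) unfolding B2_def small_def by auto
  have c0: "card B2 \<le> card Be + card (small (Suc m) Be)" unfolding B2_def by (rule card_Un_le)
  have c1: "card (small (Suc m) Be) \<le> Suc m * cls Be" by (rule small_card[OF be(2)])
  have "cls Be \<le> lam" by (rule cls_le[OF be(2)])
  then have "Suc m * cls Be \<le> Suc m * lam" by (rule mult_le_mono2)
  with c0 c1 have c2: "card B2 \<le> card Be + Suc m * lam" by linarith
  have "Suc m * (lam - cls B) \<le> Suc m * lam" by (rule mult_le_mono2) simp
  with be(4) c2 have c2': "card B2 \<le> card B + 2 * (Suc m * lam)" by linarith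
  obtain B' where b': "B2 \<subseteq> B'" "B' \<subseteq> U" "Inv B' 0" "card B' \<le> card B2 + m * (m + 1) * lam"
    using Suc.IH[OF B2U I2] by blast
  have "card B' \<le> card B + Suc m * (Suc m + 1) * lam"
    using b'(4) c2' by (simp add: algebra_simps)
  moreover have "B \<subseteq> B'" using be(1) b'(1) unfolding B2_def by auto
  ultimately show ?case using b' by blast
qed

lemma wt_sym: "wt u v \<Longrightarrow> wt v u"
  unfolding wt_def by (metis insert_commute)

lemma wt_refl: "wt u u"
  unfolding wt_def by simp

lemma replace_R:
  assumes w: "wt a b" and bt: "b \<notin> set t" and tU: "set t \<subseteq> U" and len: "length t = n"
  shows "(t \<in> R) = (map (\<lambda>x. if x = a then b else x) t \<in> R)"
proof -
  define \<psi> where "\<psi> = Pos (Rel (map (\<lambda>x. if x = a then Var else Par x) t))"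
  have wf: "lit_wf n \<psi>" unfolding \<psi>_def using len by simp
  have "lit_params \<psi> = (\<Union>x\<in>set t. tm_params (if x = a then Var else Par x))"
    unfolding \<psi>_def by (simp only: lit_params.simps atom_params.simps set_map UN_simps image_image)
  also have "\<dots> = set t - {a}" by (rule params_map_if)
  finally have "lit_params \<psi> \<subseteq> U - {a,b}" using tU bt by auto
  then have eq: "lit_holds R a \<psi> = lit_holds R b \<psi>" using w wf unfolding wt_def by blast
  have ha: "map (tm_val a) (map (\<lambda>x. if x = a then Var else Par x) t) = t"
    by (induction t) auto
  have hb: "map (tm_val b) (map (\<lambda>x. if x = a then Var else Par x) t) = map (\<lambda>x. if x = a then b else x) t"
    by (induction t) auto
  have la: "lit_holds R a \<psi> = (t \<in> R)"
    unfolding \<psi>_def by (simp only: lit_holds.simps atom_holds.simps ha)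
  have lb: "lit_holds R b \<psi> = (map (\<lambda>x. if x = a then b else x) t \<in> R)"
    unfolding \<psi>_def by (simp only: lit_holds.simps atom_holds.simps hb)
  show ?thesis using eq la lb by simp
qed

definition sw :: "'a \<Rightarrow> 'a \<Rightarrow> 'a \<Rightarrow> 'a" where
  "sw u v x = (if x = u then v else if x = v then u else x)"

lemma sw_inj: "sw u v x = sw u v y \<Longrightarrow> x = y"
  unfolding sw_def by (auto split: if_splits)

lemma transp_R:
  assumes finX: "finite X" and XU: "X \<subseteq> U" and cX: "n < card X"
    and pw: "\<forall>p\<in>X. \<forall>q\<in>X. wt p q" and u: "u \<in> X" and v: "v \<in> X"
    and tU: "set t \<subseteq> U" and len: "length t = n"
  shows "(t \<in> R) = (map (sw u v) t \<in> R)"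
proof (cases "u = v")
  case True
  then have "map (sw u v) t = t" unfolding sw_def by (induction t) auto
  then show ?thesis by simp
next
  case uv: False
  show ?thesis
  proof (cases "u \<in> set t")
    case ut: True
    show ?thesis
    proof (cases "v \<in> set t")
      case vt: True
      have "card (set t) \<le> n" using card_length[of t] len by simp
      then have "\<not> X \<subseteq> set t" using cX card_mono[of "set t" X] by auto
      then obtain w where wX: "w \<in> X" and wt': "w \<notin> set t" by blast
      have wu: "w \<noteq> u" and wv: "w \<noteq> v" using wt' ut vt by auto
      define t1 where "t1 = map (\<lambda>x. if x = u then w else x) t"
      define t2 where "t2 = map (\<lambda>x. if x = v then u else x) t1"
      define t3 where "t3 = map (\<lambda>x. if x = w then v else x) t2"
      have XU': "u \<in> U" "v \<in> U" "w \<in> U" using XU u v wX by auto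
      have s1: "set t1 \<subseteq> U" unfolding t1_def using tU XU' by auto
      have s2: "set t2 \<subseteq> U" unfolding t2_def using s1 XU' by auto
      have l1: "length t1 = n" "length t2 = n" unfolding t1_def t2_def using len by auto
      have e1: "(t \<in> R) = (t1 \<in> R)"
        unfolding t1_def by (rule replace_R[OF _ wt' tU len]) (use pw u wX in blast)
      have ut1: "u \<notin> set t1" unfolding t1_def using wu by auto
      have e2: "(t1 \<in> R) = (t2 \<in> R)"
        unfolding t2_def by (rule replace_R[OF _ ut1 s1 l1(1)]) (use pw u v in blast)
      have vt2: "v \<notin> set t2" unfolding t2_def t1_def using uv wv by auto
      have e3: "(t2 \<in> R) = (t3 \<in> R)"
        unfolding t3_def by (rule replace_R[OF _ vt2 s2 l1(2)]) (use pw v wX in blast)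
      have "t3 = map (sw u v) t"
        unfolding t3_def t2_def t1_def sw_def using wt' wu wv uv
        by (induction t) auto
      then show ?thesis using e1 e2 e3 by simp
    next
      case vt: False
      have "map (sw u v) t = map (\<lambda>x. if x = u then v else x) t"
        unfolding sw_def using vt by (induction t) auto
      moreover have "(t \<in> R) = (map (\<lambda>x. if x = u then v else x) t \<in> R)"
        by (rule replace_R[OF _ vt tU len]) (use pw u v in blast)
      ultimately show ?thesis by metis
    qed
  next
    case ut: False
    show ?thesis
    proof (cases "v \<in> set t")
      case vt: True
      have "map (sw u v) t = map (\<lambda>x. if x = v then u else x) t"
        unfolding sw_def using ut by (induction t) auto
      moreover have "(t \<in> R) = (map (\<lambda>x. if x = v then u else x) t \<in> R)"
        by (rule replace_R[OF _ ut tU len]) (use pw u v in blast)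
      ultimately show ?thesis by metis
    next
      case vt: False
      have "map (sw u v) t = t" unfolding sw_def using ut vt by (induction t) auto
      then show ?thesis by simp
    qed
  qed
qed

lemma B_part:
  fixes E :: "('a \<times> 'a) set"
  assumes H: "\<forall>x y. (x,y) \<in> E \<longrightarrow> x \<noteq> y \<longrightarrow>
      (\<exists>X. finite X \<and> X \<subseteq> U \<and> n < card X \<and> x \<in> X \<and> y \<in> X \<and> (\<forall>p\<in>X. \<forall>q\<in>X. wt p q))"
    and Et: "\<forall>x y z. (x,y) \<in> E \<longrightarrow> (y,z) \<in> E \<longrightarrow> (x,z) \<in> E"
    and Er: "\<forall>x\<in>U. (x,x) \<in> E"
  shows "length b = n \<Longrightarrow> length c = n \<Longrightarrow> set b \<subseteq> U \<Longrightarrow> set c \<subseteq> U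
    \<Longrightarrow> (\<forall>i<n. \<forall>j<n. b!i = b!j \<longleftrightarrow> c!i = c!j) \<Longrightarrow> (\<forall>i<n. (b!i, c!i) \<in> E)
    \<Longrightarrow> (b \<in> R \<longleftrightarrow> c \<in> R)"
proof (induction "card {i. i < n \<and> b!i \<noteq> c!i}" arbitrary: b rule: less_induct)
  case less
  define M where "M = {i. i < n \<and> b!i \<noteq> c!i}"
  have finM: "finite M" unfolding M_def by simp
  show ?case
  proof (cases "M = {}")
    case True
    have "b = c"
    proof (rule nth_equalityI)
      show "length b = length c" using less.prems by simp
      fix i assume "i < length b"
      then show "b!i = c!i" using True less.prems(1) unfolding M_def by auto
    qed
    then show ?thesis by simp
  next
    case False
    then obtain i where i: "i < n" "b!i \<noteq> c!i" unfolding M_def by auto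
    define u where "u = b!i"
    define v where "v = c!i"
    have uvE: "(u,v) \<in> E" using less.prems(6) i unfolding u_def v_def by blast
    have uv: "u \<noteq> v" using i unfolding u_def v_def by simp
    from H[rule_format, OF uvE uv] obtain X where
      X: "finite X" "X \<subseteq> U" "n < card X" "u \<in> X" "v \<in> X" "\<forall>p\<in>X. \<forall>q\<in>X. wt p q"
      by blast
    have uU: "u \<in> U" and vU: "v \<in> U" using X by auto
    define b' where "b' = map (sw u v) b"
    have eqR: "(b \<in> R) = (b' \<in> R)"
      unfolding b'_def by (rule transp_R[OF X(1,2,3,6,4,5) less.prems(3) less.prems(1)])
    have lb': "length b' = n" unfolding b'_def using less.prems(1) by simp
    have sb': "set b' \<subseteq> U" unfolding b'_def sw_def using less.prems(3) uU vU by auto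
    have nth': "b'!j = sw u v (b!j)" if "j < n" for j
      unfolding b'_def using that less.prems(1) by simp
    have pat: "b!j = b!k \<longleftrightarrow> c!j = c!k" if "j < n" "k < n" for j k
      using less.prems(5) that by blast
    have pat': "\<forall>j<n. \<forall>k<n. b'!j = b'!k \<longleftrightarrow> c!j = c!k"
    proof (intro allI impI)
      fix j k assume jk: "j < n" "k < n"
      have swi: "sw u v x = sw u v y \<longleftrightarrow> x = y" for x y using sw_inj by blast
      have "b'!j = b'!k \<longleftrightarrow> b!j = b!k" using nth'[OF jk(1)] nth'[OF jk(2)] swi by simp
      then show "b'!j = b'!k \<longleftrightarrow> c!j = c!k" using pat jk by simp
    qed
    have E': "\<forall>j<n. (b'!j, c!j) \<in> E"
    proof (intro allI impI)
      fix j assume j: "j < n"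
      have bjE: "(b!j, c!j) \<in> E" using less.prems(6) j by blast
      show "(b'!j, c!j) \<in> E"
      proof (cases "b!j = u")
        case True
        then have "c!j = v" using pat[OF j i(1)] unfolding u_def v_def by simp
        moreover have "b'!j = v" using nth'[OF j] True unfolding sw_def by simp
        ultimately show ?thesis using Er vU by simp
      next
        case bu: False
        show ?thesis
        proof (cases "b!j = v")
          case True
          then have "b'!j = u" using nth'[OF j] bu unfolding sw_def by simp
          moreover have "(v, c!j) \<in> E" using bjE True by simp
          ultimately show ?thesis using Et uvE by blast
        next
          case False
          then have "b'!j = b!j" using nth'[OF j] bu unfolding sw_def by simp
          then show ?thesis using bjE by simp
        qed
      qed
    qed
    have sub: "{j. j < n \<and> b'!j \<noteq> c!j} \<subseteq> M - {i}"
    proof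
      fix j assume "j \<in> {j. j < n \<and> b'!j \<noteq> c!j}"
      then have j: "j < n" "b'!j \<noteq> c!j" by auto
      have ji: "j \<noteq> i"
      proof
        assume "j = i"
        then have "b'!j = v" using nth'[OF j(1)] unfolding sw_def u_def by simp
        then show False using j(2) \<open>j = i\<close> unfolding v_def by simp
      qed
      have "b!j \<noteq> c!j"
      proof
        assume eq: "b!j = c!j"
        have "b!j \<noteq> u"
        proof
          assume "b!j = u"
          then have "c!j = v" using pat[OF j(1) i(1)] unfolding u_def v_def by simp
          then show False using eq \<open>b!j = u\<close> uv by simp
        qed
        moreover have "b!j \<noteq> v"
        proof
          assume "b!j = v"
          then have "c!j = c!i" using eq unfolding v_def by simp
          then have "b!j = b!i" using pat[OF j(1) i(1)] by simp
          then show False using \<open>b!j = v\<close> uv unfolding u_def by simp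
        qed
        ultimately have "b'!j = b!j" using nth'[OF j(1)] unfolding sw_def by simp
        then show False using eq j(2) by simp
      qed
      then show "j \<in> M - {i}" using j(1) ji unfolding M_def by simp
    qed
    have iM: "i \<in> M" using i unfolding M_def by simp
    have "card {j. j < n \<and> b'!j \<noteq> c!j} \<le> card (M - {i})"
      by (rule card_mono[OF _ sub]) (use finM in simp)
    also have "\<dots> < card M" by (rule card_Diff1_less[OF finM iM])
    finally have lt: "card {j. j < n \<and> b'!j \<noteq> c!j} < card {i. i < n \<and> b!i \<noteq> c!i}"
      unfolding M_def .
    have "(b' \<in> R) = (c \<in> R)"
      using less.hyps[OF lt lb' less.prems(2) sb' less.prems(4) pat' E'] .
    then show ?thesis using eqR by simp
  qed
qed

lemma quot_card:
  assumes AU: "A \<subseteq> U"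
  shows "card (U // E_rel U n R A) \<le> card A + lam"
proof -
  let ?E = "E_rel U n R A"
  let ?f = "\<lambda>x. ?E `` {x}"
  let ?g = "\<lambda>\<tau>. {y \<in> U. \<tau> = tp y A}"
  have q: "U // ?E = ?f ` U" unfolding quotient_def by auto
  have split: "?f ` U = ?f ` A \<union> ?f ` (U - A)" using AU by auto
  have fg: "?f x = ?g (tp x A)" if "x \<in> U" for x
    using that unfolding E_rel_def by auto
  have img: "?f ` (U - A) = ?g ` ((\<lambda>x. tp x A) ` (U - A))"
  proof -
    have "?f ` (U - A) = (\<lambda>x. ?g (tp x A)) ` (U - A)"
      by (rule image_cong[OF refl]) (use fg in auto)
    then show ?thesis by (simp add: image_image)
  qed
  have c2: "card (?f ` (U - A)) \<le> cls A"
    unfolding img cls_def by (rule card_image_le) (use finU in simp)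
  have "card (U // ?E) \<le> card (?f ` A) + card (?f ` (U - A))"
    unfolding q split by (rule card_Un_le)
  also have "card (?f ` A) \<le> card A" by (rule card_image_le) (use finU AU finite_subset in blast)
  also have "card (?f ` (U - A)) \<le> lam" using c2 cls_le[of A] AU by simp
  finally show ?thesis by simp
qed

end


theorem lemma3p4:
  fixes U :: "'a set" and n :: nat and R :: "'a list set"
  assumes "finite U"
    and "is_relation U n R"
    and "lambda1 U n R * n ^ 2 + n < card U"
  shows "\<exists>A C. A \<subseteq> U \<and> (\<forall>l < n - 2. C l \<subseteq> U)
     \<and> card A \<le> n * n * lambda1 U n R
     \<and> (\<forall>b c. length b = n \<and> length c = n \<and> set b \<subseteq> U \<and> set c \<subseteq> U
           \<and> (\<forall>i<n. \<forall>j<n. b ! i = b ! j \<longleftrightarrow> c ! i = c ! j)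
           \<and> (\<forall>i<n. (b ! i, c ! i) \<in> E_rel_C U n R A (n - 2) C)
           \<longrightarrow> (b \<in> R \<longleftrightarrow> c \<in> R))
     \<and> card (U // E_rel U n R A) \<le> card A + lambda1 U n R
     \<and> (\<forall>l < n - 2. card (C l) \<le> lambda1 U n R)"
proof -
  interpret L: L3 U n R by unfold_locales (rule assms(1))
  obtain B' where B': "B' \<subseteq> U" "L.Inv B' 0" "card B' \<le> card ({}::'a set) + (n - 1) * (n - 1 + 1) * L.lam"
    using L.Lmain[OF _ L.Inv_init] by blast
  define A where "A = B' \<union> L.small n B'"
  define C where "C = (\<lambda>l::nat. ({} :: 'a set))"
  have lam: "L.lam = lambda1 U n R" by (rule L.lam_def)
  have BA: "B' \<subseteq> A" unfolding A_def by simp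
  have AU: "A \<subseteq> U" using B'(1) unfolding A_def L.small_def by auto
  have cardA: "card A \<le> n * n * lambda1 U n R"
  proof -
    have c0: "card A \<le> card B' + card (L.small n B')" unfolding A_def by (rule card_Un_le)
    have c1: "card (L.small n B') \<le> n * L.cls B'" by (rule L.small_card[OF B'(1)])
    have c2: "n * L.cls B' \<le> n * L.lam" by (rule mult_le_mono2) (rule L.cls_le[OF B'(1)])
    have c3: "(n - 1) * (n - 1 + 1) * L.lam + n * L.lam = n * n * L.lam"
      by (cases n) (simp_all add: algebra_simps)
    have c4: "card B' \<le> (n - 1) * (n - 1 + 1) * L.lam" using B'(3) by simp
    have "card A \<le> n * n * L.lam" using c0 c1 c2 c3 c4 by linarith
    then show ?thesis using lam by simp
  qed
  have EC: "E_rel_C U n R A (n - 2) C = E_rel U n R A"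
    unfolding E_rel_C_def C_def by auto
  have Eeq: "(x, y) \<in> E_rel U n R A \<longleftrightarrow> x \<in> U \<and> y \<in> U \<and> L.tp x A = L.tp y A" for x y
    unfolding E_rel_def by simp
  have notA: "x \<notin> A" if "(x, y) \<in> E_rel U n R A" "x \<noteq> y" for x y
  proof
    assume xA: "x \<in> A"
    let ?\<phi> = "Pos (Eq Var (Par x)) :: 'a lit"
    have "?\<phi> \<in> L.tp x A" using xA unfolding tp_bs_def by simp
    then have "?\<phi> \<in> L.tp y A" using that(1) Eeq by simp
    then have "y = x" unfolding tp_bs_def by simp
    then show False using that(2) by simp
  qed
  have H: "\<forall>x y. (x,y) \<in> E_rel U n R A \<longrightarrow> x \<noteq> y \<longrightarrow>
      (\<exists>X. finite X \<and> X \<subseteq> U \<and> n < card X \<and> x \<in> X \<and> y \<in> X \<and> (\<forall>p\<in>X. \<forall>q\<in>X. L.wt p q))"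
  proof (intro allI impI)
    fix x y assume xy: "(x,y) \<in> E_rel U n R A" "x \<noteq> y"
    have yx: "(y,x) \<in> E_rel U n R A" using xy(1) Eeq by auto
    have xA: "x \<notin> A" by (rule notA[OF xy])
    have yA: "y \<notin> A" using notA[OF yx] xy(2) by auto
    have xU: "x \<in> U" and yU: "y \<in> U" and e: "L.tp x A = L.tp y A" using xy(1) Eeq by auto
    have eB: "L.tp x B' = L.tp y B'" by (rule L.tp_eq_restrict[OF BA e])
    define X where "X = L.clsof B' x"
    have XU: "X \<subseteq> U" unfolding X_def L.clsof_def by auto
    have finX: "finite X" using XU assms(1) finite_subset by blast
    have xB: "x \<in> U - B'" and yB: "y \<in> U - B'" using xA yA xU yU BA by auto
    have cX: "n < card X" using xA xB unfolding A_def L.small_def X_def by auto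
    have xX: "x \<in> X" using xB unfolding X_def L.clsof_def by simp
    have yX: "y \<in> X" using yB eB unfolding X_def L.clsof_def by simp
    have pw: "\<forall>p\<in>X. \<forall>q\<in>X. L.wt p q"
    proof (intro ballI)
      fix p q assume "p \<in> X" "q \<in> X"
      then have "p \<in> U - B'" "q \<in> U - B'" "L.tp p B' = L.tp q B'" unfolding X_def L.clsof_def by auto
      then show "L.wt p q" by (rule L.Inv0_wt[OF B'(2)])
    qed
    show "\<exists>X. finite X \<and> X \<subseteq> U \<and> n < card X \<and> x \<in> X \<and> y \<in> X \<and> (\<forall>p\<in>X. \<forall>q\<in>X. L.wt p q)"
      using finX XU cX xX yX pw by blast
  qed
  have Et: "\<forall>x y z. (x,y) \<in> E_rel U n R A \<longrightarrow> (y,z) \<in> E_rel U n R A \<longrightarrow> (x,z) \<in> E_rel U n R A"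
    using Eeq by auto
  have Er: "\<forall>x\<in>U. (x,x) \<in> E_rel U n R A" using Eeq by auto
  have partB: "\<forall>b c. length b = n \<and> length c = n \<and> set b \<subseteq> U \<and> set c \<subseteq> U
           \<and> (\<forall>i<n. \<forall>j<n. b ! i = b ! j \<longleftrightarrow> c ! i = c ! j)
           \<and> (\<forall>i<n. (b ! i, c ! i) \<in> E_rel_C U n R A (n - 2) C)
           \<longrightarrow> (b \<in> R \<longleftrightarrow> c \<in> R)"
    unfolding EC using L.B_part[OF H Et Er] by blast
  have partC: "card (U // E_rel U n R A) \<le> card A + lambda1 U n R"
    using L.quot_card[OF AU] lam by simp
  have partD: "\<forall>l < n - 2. card (C l) \<le> lambda1 U n R" unfolding C_def by simp
  have CU: "\<forall>l < n - 2. C l \<subseteq> U" unfolding C_def by simp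
  show ?thesis using AU CU cardA partB partC partD by blast
qed

end
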